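(* There is an absolute constant $C$ such that for every general ordinal setting with $n\ge2$ agents there is a randomized mechanism $\mathcal{M}$ that is a $C\log n$-rank-approximation mechanism, i.e. for every profile $\succ$ and every $i\in[m]$, $\mathbb{E}[\mathrm{rank}_i(\mathcal{M}(\succ);\succ)]\ge\mathrm{maxrank}_i(\succ)/(C\log n)$.
   Context: General ordinal setting: $n$ agents and $m$ outcomes; each agent has a strict total order $\succ_j$ on the outcomes. $\mathrm{rank}_i(o;\succ)$ is the number of agents having $o$ among their top $i$ outcomes, $\mathrm{maxrank}_i(\succ)=\max_o\mathrm{rank}_i(o;\succ)$. A randomized mechanism maps each profile to a probability distribution over outcomes; expectation is over its randomness. *)

theory Defs
  imports "HOL-Probability.Probability"
begin

text \<open>A preference of an agent is a list of
all outcomes without repetition, ordered from most to least preferred (a strict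
total order).\<close>

definition is_pref :: "nat \<Rightarrow> nat list \<Rightarrow> bool" where
  "is_pref m l \<longleftrightarrow> distinct l \<and> set l = {..<m}"

definition is_profile :: "nat \<Rightarrow> nat \<Rightarrow> (nat \<Rightarrow> nat list) \<Rightarrow> bool" where
  "is_profile n m P \<longleftrightarrow> (\<forall>j<n. is_pref m (P j))"

definition rank :: "nat \<Rightarrow> (nat \<Rightarrow> nat list) \<Rightarrow> nat \<Rightarrow> nat \<Rightarrow> nat" where
  "rank n P i x = card {j. j < n \<and> x \<in> set (take i (P j))}"

definition maxrank :: "nat \<Rightarrow> nat \<Rightarrow> (nat \<Rightarrow> nat list) \<Rightarrow> nat \<Rightarrow> nat" where
  "maxrank n m P i = Max ((\<lambda>x. rank n P i x) ` {..<m})"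

end

theory Submission
  imports Defs "HOL-Library.Discrete_Functions"
begin

lemma rank_mono:
  assumes "j \<le> i" shows "rank n P j x \<le> rank n P i x"
proof -
  have "set (take j l) \<subseteq> set (take i l)" for l :: "nat list"
    using assms by (metis set_take_subset_set_take)
  hence "{k. k < n \<and> x \<in> set (take j (P k))} \<subseteq> {k. k < n \<and> x \<in> set (take i (P k))}" by blast
  thus ?thesis unfolding rank_def by (intro card_mono) auto
qed

lemma rank_le: "rank n P i x \<le> n"
proof -
  have "card {k. k < n \<and> x \<in> set (take i (P k))} \<le> card {..<n}"
    by (intro card_mono) auto
  thus ?thesis unfolding rank_def by simp
qed

definition pick :: "nat \<Rightarrow> nat \<Rightarrow> (nat \<Rightarrow> nat list) \<Rightarrow> nat \<Rightarrow> nat" where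
  "pick n m P t = (if \<exists>j x. x < m \<and> 2^t \<le> rank n P j x then
      (SOME x. x < m \<and> 2^t \<le> rank n P (LEAST j. \<exists>x<m. 2^t \<le> rank n P j x) x) else 0)"

lemma pick_lt: "m \<ge> 1 \<Longrightarrow> pick n m P t < m"
proof (cases "\<exists>j x. x < m \<and> 2^t \<le> rank n P j x")
  case True
  then obtain j x where "x < m" "2^t \<le> rank n P j x" by blast
  hence "\<exists>x<m. 2^t \<le> rank n P j x" by blast
  hence "\<exists>x<m. 2^t \<le> rank n P (LEAST j. \<exists>x<m. 2^t \<le> rank n P j x) x" by (rule LeastI)
  hence "pick n m P t < m \<and> 2^t \<le> rank n P (LEAST j. \<exists>x<m. 2^t \<le> rank n P j x) (pick n m P t)"
    unfolding pick_def using True by (simp, metis (no_types, lifting) someI_ex)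
  thus ?thesis by simp
qed (auto simp: pick_def)

lemma pick_good:
  assumes "x < m" "2^t \<le> rank n P i x"
  shows "2^t \<le> rank n P i (pick n m P t)"
proof -
  have T: "\<exists>j x. x < m \<and> 2^t \<le> rank n P j x" using assms by blast
  have ex: "\<exists>x<m. 2^t \<le> rank n P i x" using assms by blast
  define j0 where "j0 = (LEAST j. \<exists>x<m. 2^t \<le> rank n P j x)"
  have j0: "j0 \<le> i" unfolding j0_def using ex by (rule Least_le)
  have "\<exists>x<m. 2^t \<le> rank n P j0 x" unfolding j0_def using ex by (rule LeastI)
  hence "pick n m P t < m \<and> 2^t \<le> rank n P j0 (pick n m P t)"
    unfolding pick_def using T j0_def by (simp, metis (no_types, lifting) someI_ex)
  thus ?thesis using rank_mono[OF j0, of n P] by (meson order_trans)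
qed

theorem theorem16:
  shows "\<exists>C::real. C > 0 \<and>
    (\<forall>n m::nat. n \<ge> 2 \<longrightarrow> m \<ge> 1 \<longrightarrow>
      (\<exists>M :: (nat \<Rightarrow> nat list) \<Rightarrow> nat pmf.
         (\<forall>P. is_profile n m P \<longrightarrow> set_pmf (M P) \<subseteq> {..<m}) \<and>
         (\<forall>P. is_profile n m P \<longrightarrow> (\<forall>i\<in>{1..m}.
            measure_pmf.expectation (M P) (\<lambda>x. real (rank n P i x))
              \<ge> real (maxrank n m P i) / (C * ln (real n))))))"
proof (intro exI[of _ 8] conjI allI impI)
  fix n m :: nat assume n2: "n \<ge> 2" and m1: "m \<ge> 1"
  define L where "L = {..floor_log n}"
  have Lfin: "finite L" and Lne: "L \<noteq> {}" by (auto simp: L_def)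
  have cardL: "card L = floor_log n + 1" by (simp add: L_def)
  have lnpos: "ln (real n) > 0" using n2 by simp
  have "ln (1 - 1/2::real) \<le> - (1/2)" by (rule ln_one_minus_pos_upper_bound) auto
  hence ln2: "ln (2::real) \<ge> 1/2" by (simp add: ln_div)
  have "real (2 ^ floor_log n) \<le> real n" using floor_log_exp2_le[of n] n2 by simp
  hence "ln (real (2 ^ floor_log n)) \<le> ln (real n)" using n2 by (subst ln_le_cancel_iff) auto
  hence A: "real (floor_log n) * ln 2 \<le> ln (real n)" by (simp add: ln_realpow)
  have B: "ln 2 \<le> ln (real n)" using n2 by simp
  have cardLb: "real (card L) \<le> 4 * ln (real n)"
  proof -
    have "real (floor_log n) * ln 2 + ln 2 \<le> 2 * ln (real n)" using A B by linarith
    hence "(real (floor_log n) + 1) * ln 2 \<le> 2 * ln (real n)" by (simp add: algebra_simps)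
    hence "(real (floor_log n) + 1) * (1/2) \<le> 2 * ln (real n)"
      using ln2 by (smt (verit) mult_left_mono of_nat_0_le_iff)
    thus ?thesis using cardL lnpos by simp
  qed
  let ?M = "\<lambda>P. map_pmf (pick n m P) (pmf_of_set L)"
  show "\<exists>M :: (nat \<Rightarrow> nat list) \<Rightarrow> nat pmf.
         (\<forall>P. is_profile n m P \<longrightarrow> set_pmf (M P) \<subseteq> {..<m}) \<and>
         (\<forall>P. is_profile n m P \<longrightarrow> (\<forall>i\<in>{1..m}.
            measure_pmf.expectation (M P) (\<lambda>x. real (rank n P i x))
              \<ge> real (maxrank n m P i) / (8 * ln (real n))))"
  proof (intro exI[of _ ?M] conjI allI impI ballI)
    fix P show "set_pmf (?M P) \<subseteq> {..<m}" using pick_lt[OF m1] Lfin Lne by auto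
  next
    fix P i assume "is_profile n m P" "i \<in> {1..m}"
    define r where "r = maxrank n m P i"
    have E: "measure_pmf.expectation (?M P) (\<lambda>x. real (rank n P i x))
        = (\<Sum>t\<in>L. real (rank n P i (pick n m P t))) / card L"
      using Lfin Lne by (simp add: integral_pmf_of_set)
    show "real r / (8 * ln (real n)) \<le> measure_pmf.expectation (?M P) (\<lambda>x. real (rank n P i x))"
    proof (cases "r = 0")
      case True
      thus ?thesis unfolding E by (simp add: sum_nonneg)
    next
      case False
      have fin: "finite ((\<lambda>x. rank n P i x) ` {..<m})" by simp
      have ne: "(\<lambda>x. rank n P i x) ` {..<m} \<noteq> {}" proof -
        have "0 \<in> {..<m}" using m1 by simp
        thus ?thesis by blast
      qed
      obtain x where x: "x < m" "rank n P i x = r"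
        using Max_in[OF fin ne] unfolding r_def maxrank_def by auto
      define t where "t = floor_log r"
      have t1: "2^t \<le> r" unfolding t_def using False floor_log_exp2_le by simp
      have t2: "r < 2 * 2^t" unfolding t_def by (rule floor_log_exp2_gt)
      have "r \<le> n" using x rank_le by metis
      hence tL: "t \<in> L" unfolding L_def t_def using floor_log_le_iff by simp
      have good: "2^t \<le> rank n P i (pick n m P t)" using pick_good[of x m t n P i] x t1 by simp
      have "real (rank n P i (pick n m P t)) \<le> (\<Sum>t\<in>L. real (rank n P i (pick n m P t)))"
        using Lfin tL by (intro member_le_sum) auto
      moreover have "real r / 2 \<le> real (rank n P i (pick n m P t))"
        proof -
        have "real r < 2 * real (2^t)" using t2 by (metis of_nat_less_iff of_nat_mult of_nat_numeral)
        moreover have "real ((2::nat)^t) \<le> real (rank n P i (pick n m P t))" using good by (simp only: of_nat_le_iff)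
        ultimately show ?thesis by linarith
      qed
      ultimately have S: "real r / 2 \<le> (\<Sum>t\<in>L. real (rank n P i (pick n m P t)))" by linarith
      have cpos: "real (card L) > 0" using Lfin Lne by (simp add: card_gt_0_iff)
      have "real r / (8 * ln (real n)) = (real r / 2) / (4 * ln (real n))" by simp
      also have "\<dots> \<le> (real r / 2) / real (card L)"
        using cardLb cpos by (intro divide_left_mono) auto
      also have "\<dots> \<le> (\<Sum>t\<in>L. real (rank n P i (pick n m P t))) / card L"
        using S cpos by (intro divide_right_mono) auto
      finally show ?thesis unfolding E .
    qed
  qed
qed simp

end
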